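(* Let $n,p\ge1$ be integers and let $A=A^{p+1}_{n+1}$ with order $\le$ and multiplication $\odot$ as defined in the context. For all $a,b,c\in A$, if $b\le c$ then $a\odot b\le a\odot c$.
   Context: Order $\mathbb{Z}\times\mathbb{Z}$ lexicographically: $(m,r)\preccurlyeq(k,s)$ iff $m<k$, or $m=k$ and $r\le s$; addition/subtraction of pairs is componentwise, and $\min,\max$ of pairs refer to $\preccurlyeq$. For an integer $n\ge1$ let $L^\omega_{n+1}=\{(m,r)\in\mathbb{Z}^2:(0,0)\preccurlyeq(m,r)\preccurlyeq(n,0)\}$ with $x\ast y=\max\{(0,0),x+y-(n,0)\}$ and $x\to y=\min\{(n,0),(n,0)-x+y\}$. For an integer $p\ge1$ let $L_{p+1}=\{0,1,\dots,p\}$ with $\alpha\ast\beta=\max\{0,\alpha+\beta-p\}$. Define $$A=A^{p+1}_{n+1}=\{\langle(m,r),\alpha\rangle:(m,r)\in L^\omega_{n+1},\ \alpha\in\{0,p\}\}\cup\{\langle(m,r),\alpha\rangle:(0,0)\preccurlyeq(m,r)\preccurlyeq(n-1,0),\ 0<\alpha<p\}.$$ Order: $\langle(m,r),\alpha\rangle\le\langle(k,s),\beta\rangle$ iff one of: (o1) $\alpha\neq0$, $\alpha\le\beta$ and $(m,r)\preccurlyeq(k,s)$; (o2) $\alpha=\beta=0$ and $(k,s)\preccurlyeq(m,r)$; (o3) $\alpha=0$, $\beta\ne0$ and $(n-1,0)\preccurlyeq(m+k,r+s)$. Put $\bot=\langle(n,0),0\rangle$, $\top=\langle(n,0),p\rangle$.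 For $a=\langle(m,r),\alpha\rangle$, $b=\langle(k,s),\beta\rangle\in A$ define $a\odot b$ by: (P1) if $\alpha,\beta\ge1$ and $\alpha+\beta>p$: $a\odot b=\langle(m,r)\ast(k,s),\alpha+\beta-p\rangle$; (P2) if $\alpha,\beta\ge1$ and $\alpha+\beta\le p$: $a\odot b=\langle\min\{(n,0),(2n-(m+k+1),-(r+s))\},0\rangle$; (P3) if $\alpha\ge1$, $\beta=0$: $a\odot b=\langle(m,r)\to(k,s),0\rangle$, and if $\alpha=0$, $\beta\ge1$: $a\odot b=\langle(k,s)\to(m,r),0\rangle$; (P4) if $\alpha=\beta=0$: $a\odot b=\langle\min\{(n,0),(m+k+1,r+s)\},0\rangle$. *)

theory Defs
  imports Main
begin

definition lex_le :: "int \<times> int \<Rightarrow> int \<times> int \<Rightarrow> bool" where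
  "lex_le x y \<longleftrightarrow> fst x < fst y \<or> (fst x = fst y \<and> snd x \<le> snd y)"

definition lex_min :: "int \<times> int \<Rightarrow> int \<times> int \<Rightarrow> int \<times> int" where
  "lex_min x y = (if lex_le x y then x else y)"

definition lex_max :: "int \<times> int \<Rightarrow> int \<times> int \<Rightarrow> int \<times> int" where
  "lex_max x y = (if lex_le x y then y else x)"

definition Lomega :: "int \<Rightarrow> (int \<times> int) set" where
  "Lomega n = {x. lex_le (0,0) x \<and> lex_le x (n,0)}"

definition lstar :: "int \<Rightarrow> int \<times> int \<Rightarrow> int \<times> int \<Rightarrow> int \<times> int" where
  "lstar n x y = lex_max (0,0) (fst x + fst y - n, snd x + snd y)"

definition limp :: "int \<Rightarrow> int \<times> int \<Rightarrow> int \<times> int \<Rightarrow> int \<times> int" where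
  "limp n x y = lex_min (n,0) (n - fst x + fst y, - snd x + snd y)"

definition Acar :: "int \<Rightarrow> int \<Rightarrow> ((int \<times> int) \<times> int) set" where
  "Acar n p = {(x, \<alpha>). x \<in> Lomega n \<and> (\<alpha> = 0 \<or> \<alpha> = p)}
            \<union> {(x, \<alpha>). lex_le (0,0) x \<and> lex_le x (n - 1, 0) \<and> 0 < \<alpha> \<and> \<alpha> < p}"

definition Ale :: "int \<Rightarrow> (int \<times> int) \<times> int \<Rightarrow> (int \<times> int) \<times> int \<Rightarrow> bool" where
  "Ale n a b = (case a of (x, \<alpha>) \<Rightarrow> case b of (y, \<beta>) \<Rightarrow>
      (\<alpha> \<noteq> 0 \<and> \<alpha> \<le> \<beta> \<and> lex_le x y)
    \<or> (\<alpha> = 0 \<and> \<beta> = 0 \<and> lex_le y x)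
    \<or> (\<alpha> = 0 \<and> \<beta> \<noteq> 0 \<and> lex_le (n - 1, 0) (fst x + fst y, snd x + snd y)))"

definition Aprod :: "int \<Rightarrow> int \<Rightarrow> (int \<times> int) \<times> int \<Rightarrow> (int \<times> int) \<times> int \<Rightarrow> (int \<times> int) \<times> int" where
  "Aprod n p a b = (case a of (x, \<alpha>) \<Rightarrow> case b of (y, \<beta>) \<Rightarrow>
     if \<alpha> \<ge> 1 \<and> \<beta> \<ge> 1 \<and> \<alpha> + \<beta> > p then (lstar n x y, \<alpha> + \<beta> - p)
     else if \<alpha> \<ge> 1 \<and> \<beta> \<ge> 1 \<and> \<alpha> + \<beta> \<le> p then
       (lex_min (n,0) (2*n - (fst x + fst y + 1), - (snd x + snd y)), 0)
     else if \<alpha> \<ge> 1 \<and> \<beta> = 0 then (limp n x y, 0)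
     else if \<alpha> = 0 \<and> \<beta> \<ge> 1 then (limp n y x, 0)
     else (lex_min (n,0) (fst x + fst y + 1, snd x + snd y), 0))"

end

theory Submission
  imports Defs
begin
lemma mem: "((m,r),al) \<in> Acar n p \<Longrightarrow> p \<ge> 1 \<Longrightarrow> 0 \<le> al \<and> al \<le> p \<and> lex_le (0,0) (m,r) \<and> lex_le (m,r) (n,0)
   \<and> (0 < al \<and> al < p \<longrightarrow> lex_le (m,r) (n-1,0))"
  by (auto simp: Acar_def Lomega_def lex_le_def)

lemma X:
  fixes n p :: int
  assumes "n \<ge> 1" and "p \<ge> 1"
    and "((m,r),al) \<in> Acar n p" and "((k,s),be) \<in> Acar n p" and "((k',s'),ga) \<in> Acar n p"
    and "Ale n ((k,s),be) ((k',s'),ga)"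
  shows "Ale n (Aprod n p ((m,r),al) ((k,s),be)) (Aprod n p ((m,r),al) ((k',s'),ga))"
  using assms(1,2,6) mem[OF assms(3,2)] mem[OF assms(4,2)] mem[OF assms(5,2)]
  apply (cases "al = 0"; cases "be = 0"; cases "ga = 0"; cases "al+be>p"; cases "al+ga>p")
  apply (simp_all add: Ale_def Aprod_def lstar_def limp_def)
  apply (simp_all add: lex_min_def lex_max_def lex_le_def split: if_splits)
  subgoal by smt
  subgoal by smt
  subgoal by smt
  subgoal by smt
  subgoal by smt
  subgoal by smt
  subgoal by smt
  subgoal by smt
  subgoal by smt
  done
theorem lemma2p2:
  fixes n p :: int and a b c :: "(int \<times> int) \<times> int"
  assumes "n \<ge> 1" and "p \<ge> 1"
    and "a \<in> Acar n p" and "b \<in> Acar n p" and "c \<in> Acar n p"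
    and "Ale n b c"
  shows "Ale n (Aprod n p a b) (Aprod n p a c)"
  using assms X[of n p] by (cases a, cases b, cases c) auto

end
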